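(* Let $d\ge 1$ and $h\ge 1$ be integers, let $T$ be the complete $d$-ary tree of height $h$, and let $u,v$ be vertices of $T$ with least common ancestor $c$. Let $u'$, $v'$, $c'$ be the distances of $u$, $v$, $c$ respectively from the root. Then the hitting time from $u$ to $v$ is \[f_{h-c'}(d)-f_{h-u'}(d)+g_{h,v'}(d)-g_{h,c'}(d).\]
   Context: The complete $d$-ary tree of height $h$ is the rooted tree in which every vertex at depth less than $h$ has exactly $d$ children and every vertex at depth $h$ is a leaf. For nonnegative integers $n$, $f_0(d)=0$ and for $n\ge1$, $f_n(d)=\left(\sum_{i=0}^{n-1}(2n-2i)d^i\right)-n$. For a positive integer $k$ and nonnegative integer $m$, $g_{k,0}(d)=0$ and for $m\ge1$, $g_{k,m}(d)=\left(\sum_{i=0}^{m-1}(2m-2i)d^{k-i}\right)-m$. A simple random walk moves at each step to a uniformly random neighbor; the hitting time from $x$ to $y$ is the expected number of steps for a simple random walk started at $x$ to first reach $y$. *)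

theory Defs
  imports "HOL-Analysis.Analysis"
begin

definition f_poly :: "nat \<Rightarrow> real \<Rightarrow> real" where
  "f_poly n d = (if n = 0 then 0
     else (\<Sum>i<n. (2 * real n - 2 * real i) * d ^ i) - real n)"

definition g_poly :: "nat \<Rightarrow> nat \<Rightarrow> real \<Rightarrow> real" where
  "g_poly k m d = (if m = 0 then 0
     else (\<Sum>i<m. (2 * real m - 2 * real i) * d ^ (k - i)) - real m)"

text \<open>Complete d-ary tree of height h: vertices are words over {0..<d} of length
  at most h; the root is the empty word; the parent of a nonempty word is its
  butlast; the depth (distance from the root) is the length.\<close>
definition tree_vertices :: "nat \<Rightarrow> nat \<Rightarrow> nat list set" where
  "tree_vertices d h = {xs. length xs \<le> h \<and> set xs \<subseteq> {..<d}}"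

definition tree_adj :: "nat list \<Rightarrow> nat list \<Rightarrow> bool" where
  "tree_adj x y \<longleftrightarrow> (x \<noteq> [] \<and> y = butlast x) \<or> (y \<noteq> [] \<and> x = butlast y)"

definition tree_nbrs :: "nat \<Rightarrow> nat \<Rightarrow> nat list \<Rightarrow> nat list set" where
  "tree_nbrs d h x = {y \<in> tree_vertices d h. tree_adj x y}"

text \<open>Least common ancestor = longest common prefix.\<close>
fun lca :: "nat list \<Rightarrow> nat list \<Rightarrow> nat list" where
  "lca (a # xs) (b # ys) = (if a = b then a # lca xs ys else [])"
| "lca _ _ = []"

text \<open>First-passage probabilities of the simple random walk: the probability
  that the walk started at x first reaches y at exactly step n.\<close>
fun first_hit_prob :: "nat \<Rightarrow> nat \<Rightarrow> nat list \<Rightarrow> nat \<Rightarrow> nat list \<Rightarrow> real" where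
  "first_hit_prob d h y 0 x = (if x = y then 1 else 0)"
| "first_hit_prob d h y (Suc n) x = (if x = y then 0 else
     (\<Sum>z\<in>tree_nbrs d h x. first_hit_prob d h y n z / real (card (tree_nbrs d h x))))"

text \<open>Hitting time = expectation of the first-passage time T (in [0,\<infinity>]):
  sum of n P(T=n), plus \<infinity> if T = \<infinity> with positive probability.\<close>
definition hitting_time :: "nat \<Rightarrow> nat \<Rightarrow> nat list \<Rightarrow> nat list \<Rightarrow> ennreal" where
  "hitting_time d h x y =
     (\<Sum>n. ennreal (real n * first_hit_prob d h y n x)) +
     (if (\<Sum>n. ennreal (first_hit_prob d h y n x)) < 1 then \<infinity> else 0)"

end

theory Submission
  imports Defs
begin

definition fS :: "nat \<Rightarrow> real \<Rightarrow> real" where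
  "fS m D = (\<Sum>i<m. (real m - real i) * D ^ i)"
definition Gs :: "nat \<Rightarrow> real \<Rightarrow> real" where
  "Gs m D = (\<Sum>i<m. D ^ i)"
definition gS :: "nat \<Rightarrow> nat \<Rightarrow> real \<Rightarrow> real" where
  "gS h j D = (\<Sum>i<j. (real j - real i) * D ^ (h - i))"
definition U :: "nat \<Rightarrow> nat \<Rightarrow> real \<Rightarrow> real" where
  "U h j D = (\<Sum>i<j. D ^ (h - i))"

lemma f_eq: "f_poly m D = 2 * fS m D - real m"
  by (simp add: f_poly_def fS_def sum_distrib_left algebra_simps)

lemma g_eq: "g_poly h j D = 2 * gS h j D - real j"
  by (simp add: g_poly_def gS_def sum_distrib_left algebra_simps)

lemma fS_Suc: "fS (Suc m) D = fS m D + Gs (Suc m) D"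
proof -
  have "fS (Suc m) D = (\<Sum>i<Suc m. (real m - real i) * D ^ i) + (\<Sum>i<Suc m. D ^ i)"
    by (simp add: fS_def sum.distrib[symmetric] algebra_simps del: sum.lessThan_Suc)
  also have "(\<Sum>i<Suc m. (real m - real i) * D ^ i) = fS m D"
    by (simp add: fS_def)
  finally show ?thesis by (simp add: Gs_def)
qed

lemma Gs_Suc: "Gs (Suc m) D = 1 + D * Gs m D"
  unfolding Gs_def by (subst sum.lessThan_Suc_shift) (simp add: sum_distrib_left)

lemma fS_mult: "D * fS m D = fS (Suc m) D - real (Suc m)"
proof (induction m)
  case 0 then show ?case by (simp add: fS_def)
next
  case (Suc m)
  have "D * fS (Suc m) D = D * fS m D + D * Gs (Suc m) D" by (simp add: fS_Suc algebra_simps)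
  also have "\<dots> = fS (Suc m) D - real (Suc m) + Gs (Suc (Suc m)) D - 1"
    using Suc Gs_Suc[of "Suc m" D] by simp
  also have "\<dots> = fS (Suc (Suc m)) D - real (Suc (Suc m))"
    using fS_Suc[of "Suc m" D] by simp
  finally show ?case .
qed

lemma f_rec: "f_poly (Suc (Suc k)) D + D * f_poly k D = (D + 1) * (1 + f_poly (Suc k) D)"
proof -
  have a: "fS (Suc (Suc k)) D = fS (Suc k) D + Gs (Suc (Suc k)) D" by (rule fS_Suc)
  have b: "D * fS (Suc k) D = fS (Suc (Suc k)) D - real (Suc (Suc k))" by (rule fS_mult)
  have c: "D * fS k D = fS (Suc k) D - real (Suc k)" by (rule fS_mult)
  show ?thesis unfolding f_eq using a b c
    by (simp add: algebra_simps)
qed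

lemma f_diff: "f_poly (Suc k) D - f_poly k D = 2 * Gs (Suc k) D - 1"
  unfolding f_eq using fS_Suc[of k D] by simp

lemma Gs_geom: "(D - 1) * Gs m D = D ^ m - 1"
  by (induction m) (auto simp: Gs_def algebra_simps)

lemma f0: "f_poly 0 D = 0" by (simp add: f_poly_def)
lemma f1: "f_poly (Suc 0) D = 1" by (simp add: f_poly_def)
lemma g0: "g_poly h 0 D = 0" by (simp add: g_poly_def)
lemma g1: "g_poly h (Suc 0) D = 2 * D ^ h - 1" by (simp add: g_poly_def)

lemma gS_Suc: "gS h (Suc j) D = gS h j D + U h (Suc j) D"
proof -
  have "gS h (Suc j) D = (\<Sum>i<Suc j. (real j - real i) * D ^ (h - i)) + (\<Sum>i<Suc j. D ^ (h - i))"
    by (simp add: gS_def sum.distrib[symmetric] algebra_simps del: sum.lessThan_Suc)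
  also have "(\<Sum>i<Suc j. (real j - real i) * D ^ (h - i)) = gS h j D"
    by (simp add: gS_def)
  finally show ?thesis by (simp add: U_def)
qed

lemma g_rec: "g_poly h (Suc (Suc k)) D + g_poly h k D - 2 * g_poly h (Suc k) D = 2 * D ^ (h - Suc k)"
proof -
  have a: "gS h (Suc (Suc k)) D = gS h (Suc k) D + U h (Suc (Suc k)) D" by (rule gS_Suc)
  have b: "gS h (Suc k) D = gS h k D + U h (Suc k) D" by (rule gS_Suc)
  have c: "U h (Suc (Suc k)) D = U h (Suc k) D + D ^ (h - Suc k)" by (simp add: U_def)
  show ?thesis unfolding g_eq using a b c by (simp add: algebra_simps)
qed

lemma lca_prefix1: "\<exists>s. x = lca x y @ s"
  by (induction x y rule: lca.induct) auto
lemma lca_prefix2: "\<exists>t. y = lca x y @ t"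
  by (induction x y rule: lca.induct) auto
lemma lca_append: "lca (x @ a) (x @ b) = x @ lca a b"
  by (induction x) auto
lemma lca_self: "lca x x = x"
  by (induction x) auto
lemma lca_nil_butlast: "lca s t = [] \<Longrightarrow> lca (butlast s) t = []"
  by (cases s; cases t) (auto split: if_splits)
lemma lca_nil_app: "lca s t = [] \<Longrightarrow> s \<noteq> [] \<Longrightarrow> lca (s @ r) t = []"
  by (cases s; cases t) (auto split: if_splits)
lemma lca_Nil2[simp]: "lca x [] = []"
  by (cases x) auto

lemma nbrs_eq:
  assumes "x \<in> tree_vertices d h"
  shows "tree_nbrs d h x = (if x = [] then {} else {butlast x}) \<union>
     (if length x < h then (\<lambda>i. x @ [i]) ` {..<d} else {})"
proof -
  have adj: "tree_adj x y \<longleftrightarrow> (x \<noteq> [] \<and> y = butlast x) \<or> (\<exists>i. y = x @ [i])" for y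
    unfolding tree_adj_def
    by (metis append_butlast_last_id butlast_snoc snoc_eq_iff_butlast)
  show ?thesis using assms
    unfolding tree_nbrs_def adj tree_vertices_def
    by (auto simp: in_set_butlastD dest: in_set_butlastD)
qed

lemma nbrs_sum:
  assumes "x \<in> tree_vertices d h"
  shows "(\<Sum>z\<in>tree_nbrs d h x. \<phi> z) = (if x = [] then 0 else \<phi> (butlast x)) +
     (if length x < h then (\<Sum>i<d. \<phi> (x @ [i])) else 0)"
    and "card (tree_nbrs d h x) = (if x = [] then 0 else 1) + (if length x < h then d else 0)"
proof -
  have inj: "inj_on (\<lambda>i. x @ [i]) {..<d}" by (auto simp: inj_on_def)
  have disj: "(if x = [] then {} else {butlast x}) \<inter> (if length x < h then (\<lambda>i. x @ [i]) ` {..<d} else {}) = {}"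
    by (auto dest: arg_cong[where f=length])
  show "(\<Sum>z\<in>tree_nbrs d h x. \<phi> z) = (if x = [] then 0 else \<phi> (butlast x)) +
     (if length x < h then (\<Sum>i<d. \<phi> (x @ [i])) else 0)"
    unfolding nbrs_eq[OF assms] using disj
    by (subst sum.union_disjoint) (auto simp: sum.reindex[OF inj])
  show "card (tree_nbrs d h x) = (if x = [] then 0 else 1) + (if length x < h then d else 0)"
    unfolding nbrs_eq[OF assms] using disj
    by (subst card_Un_disjoint) (auto simp: card_image[OF inj])
qed

definition Fv :: "nat \<Rightarrow> nat \<Rightarrow> nat list \<Rightarrow> nat list \<Rightarrow> real" where
  "Fv d h v x = f_poly (h - length (lca x v)) (real d) - f_poly (h - length x) (real d)
           + g_poly h (length v) (real d) - g_poly h (length (lca x v)) (real d)"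

lemma harm_tree:
  assumes d: "d \<ge> 1" and h: "h \<ge> 1" and x: "x \<in> tree_vertices d h" and v: "v \<in> tree_vertices d h"
    and xv: "x \<noteq> v"
  shows "real (card (tree_nbrs d h x)) * (Fv d h v x - 1) = (\<Sum>z\<in>tree_nbrs d h x. Fv d h v z)"
proof -
  let ?D = "real d"
  obtain c where c: "lca x v = c" by blast
  obtain s where xs: "x = c @ s" using lca_prefix1[of x v] unfolding c by blast
  obtain t where vt: "v = c @ t" using lca_prefix2[where x=x and y=v] unfolding c by blast
  have "lca (c @ s) (c @ t) = c" using c unfolding xs[symmetric] vt[symmetric] .
  then have st: "lca s t = []" using lca_append[of c s t] by simp
  have lx: "length x \<le> h" and lv: "length v \<le> h" using x v by (auto simp: tree_vertices_def)
  show ?thesis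
  proof (cases "s = []")
    case False
    define K where "K = f_poly (h - length c) ?D + g_poly h (length v) ?D - g_poly h (length c) ?D"
    have Fx: "Fv d h v x = K - f_poly (h - length x) ?D"
      unfolding Fv_def K_def c by simp
    have xne: "x \<noteq> []" using False xs by simp
    have ls: "length s \<ge> 1" using False by (cases s) auto
    have bl: "butlast x = c @ butlast s" using xs False by (simp add: butlast_append)
    have Fp: "Fv d h v (butlast x) = K - f_poly (h - (length x - 1)) ?D"
      unfolding Fv_def K_def using bl vt lca_append[of c "butlast s" t] lca_nil_butlast[OF st] xs ls
      by simp
    have Fc: "Fv d h v (x @ [i]) = K - f_poly (h - (length x + 1)) ?D" for i
      unfolding Fv_def K_def using xs vt lca_append[of c "s @ [i]" t] lca_nil_app[OF st False]
      by (simp add: lca_append)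
    show ?thesis
    proof (cases "length x < h")
      case False
      then have "length x = h" using lx by simp
      then show ?thesis unfolding nbrs_sum[OF x] using xne Fx Fp h
        by (simp add: f0 f1)
    next
      case True
      define k where "k = h - length x - 1"
      have k: "h - length x = Suc k" using True k_def by simp
      have lx1: "length x \<ge> 1" using xne by (cases x) auto
      have k2: "h - (length x - 1) = Suc (Suc k)" using k lx1 by arith
      have k0: "h - (length x + 1) = k" using k by simp
      have r: "f_poly (Suc (Suc k)) ?D + ?D * f_poly k ?D = (?D + 1) * (1 + f_poly (Suc k) ?D)"
        by (rule f_rec)
      have Fx': "Fv d h v x = K - f_poly (Suc k) ?D" using Fx k by simp
      have Fp': "Fv d h v (butlast x) = K - f_poly (Suc (Suc k)) ?D" using Fp k2 by simp
      have Fc': "(\<Sum>i<d. Fv d h v (x @ [i])) = ?D * (K - f_poly k ?D)" using Fc k0 by simp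
      have cd: "real (card (tree_nbrs d h x)) = 1 + ?D" using nbrs_sum(2)[OF x] xne True by simp
      have ss: "(\<Sum>z\<in>tree_nbrs d h x. Fv d h v z) = (K - f_poly (Suc (Suc k)) ?D) + ?D * (K - f_poly k ?D)"
        using nbrs_sum(1)[OF x, of "Fv d h v"] xne True Fp' Fc' by simp
      show ?thesis unfolding cd ss Fx' using r by algebra
    qed
  next
    case True
    then have xc: "x = c" using xs by simp
    have tne: "t \<noteq> []" using xv xc vt by auto
    then obtain a t' where at: "t = a # t'" by (cases t) auto
    have ad: "a < d" using v vt at by (auto simp: tree_vertices_def)
    define j where "j = length x"
    have jlt: "j < h" using lv vt at xc j_def by simp
    define Gb where "Gb = g_poly h (length v) ?D"
    have Fx: "Fv d h v x = Gb - g_poly h j ?D"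
      unfolding Fv_def Gb_def j_def using xc c by simp
    have Fa: "Fv d h v (x @ [a]) = Gb - g_poly h (j + 1) ?D"
      unfolding Fv_def Gb_def j_def using xc vt at lca_append[of x "[a]" "a # t'"] by simp
    have Fi: "i \<noteq> a \<Longrightarrow> Fv d h v (x @ [i]) =
        f_poly (h - j) ?D - f_poly (h - (j + 1)) ?D + Gb - g_poly h j ?D" for i
      unfolding Fv_def Gb_def j_def using xc vt at lca_append[of x "[i]" "a # t'"] by simp
    have csum: "(\<Sum>i<d. Fv d h v (x @ [i])) = (Gb - g_poly h (j + 1) ?D) +
        (?D - 1) * (f_poly (h - j) ?D - f_poly (h - (j + 1)) ?D + Gb - g_poly h j ?D)"
    proof -
      have "(\<Sum>i<d. Fv d h v (x @ [i])) = Fv d h v (x @ [a]) + (\<Sum>i\<in>{..<d} - {a}. Fv d h v (x @ [i]))"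
        using ad by (subst sum.remove[of _ a]) auto
      also have "(\<Sum>i\<in>{..<d} - {a}. Fv d h v (x @ [i])) =
          (\<Sum>i\<in>{..<d} - {a}. f_poly (h - j) ?D - f_poly (h - (j + 1)) ?D + Gb - g_poly h j ?D)"
        using Fi by (intro sum.cong) auto
      also have "\<dots> = (?D - 1) * (f_poly (h - j) ?D - f_poly (h - (j + 1)) ?D + Gb - g_poly h j ?D)"
        using ad d by (simp add: of_nat_diff)
      finally show ?thesis using Fa by simp
    qed
    define m where "m = h - j - 1"
    have m: "h - j = Suc m" using jlt m_def by simp
    have m0: "h - (j + 1) = m" using m by simp
    have fd: "f_poly (Suc m) ?D - f_poly m ?D = 2 * Gs (Suc m) ?D - 1" by (rule f_diff)
    have gg: "(?D - 1) * Gs (Suc m) ?D = ?D ^ Suc m - 1" by (rule Gs_geom)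
    show ?thesis
    proof (cases "j = 0")
      case True
      then have x0: "x = []" using j_def by simp
      have hm: "h = Suc m" using m True by simp
      have Fx': "Fv d h v x = Gb" using Fx True by (simp add: g0)
      have cd: "real (card (tree_nbrs d h x)) = ?D" using nbrs_sum(2)[OF x] x0 jlt True j_def by simp
      have ss: "(\<Sum>z\<in>tree_nbrs d h x. Fv d h v z) = (Gb - (2 * ?D ^ Suc m - 1)) +
          (?D - 1) * ((2 * Gs (Suc m) ?D - 1) + Gb)"
        using nbrs_sum(1)[OF x, of "Fv d h v"] x0 jlt True j_def csum hm m0 fd
        by (simp add: g0 g1 del: power_Suc)
      have key: "\<And>D G P Gb::real. (D - 1) * G = P - 1 \<Longrightarrow>
          D * (Gb - 1) = Gb - (2 * P - 1) + (D - 1) * ((2 * G - 1) + Gb)" by algebra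
      show ?thesis unfolding cd ss Fx' by (rule key[OF gg])
    next
      case False
      then obtain k where jk: "j = Suc k" by (cases j) auto
      have xne: "x \<noteq> []" using False j_def by auto
      have Fp: "Fv d h v (butlast x) = Gb - g_poly h k ?D"
      proof -
        have "v = butlast x @ (last x # t)" using vt xc xne by simp
        then have "lca (butlast x) v = butlast x" using lca_append[of "butlast x" "[]" "last x # t"] by simp
        then show ?thesis unfolding Fv_def Gb_def using jk j_def by simp
      qed
      have gr: "g_poly h (Suc (Suc k)) ?D + g_poly h k ?D - 2 * g_poly h (Suc k) ?D = 2 * ?D ^ (h - Suc k)"
        by (rule g_rec)
      have hk: "h - Suc k = Suc m" using m jk by simp
      have cd: "real (card (tree_nbrs d h x)) = 1 + ?D" using nbrs_sum(2)[OF x] xne jlt j_def by simp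
      have ss: "(\<Sum>z\<in>tree_nbrs d h x. Fv d h v z) = (Gb - g_poly h k ?D) +
          ((Gb - g_poly h (Suc (Suc k)) ?D) +
          (?D - 1) * ((2 * Gs (Suc m) ?D - 1) + Gb - g_poly h (Suc k) ?D))"
        using nbrs_sum(1)[OF x, of "Fv d h v"] xne jlt j_def csum m m0 fd jk Fp
        by (simp del: power_Suc)
      have Fx': "Fv d h v x = Gb - g_poly h (Suc k) ?D" using Fx jk by simp
      have gr': "g_poly h (Suc (Suc k)) ?D + g_poly h k ?D - 2 * g_poly h (Suc k) ?D = 2 * ?D ^ Suc m"
        using gr hk by simp
      have key: "\<And>D G P Gb a b c::real. (D - 1) * G = P - 1 \<Longrightarrow> b + a - 2 * c = 2 * P \<Longrightarrow>
          (1 + D) * (Gb - c - 1) = (Gb - a) + ((Gb - b) + (D - 1) * ((2 * G - 1) + Gb - c))" by algebra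
      show ?thesis unfolding cd ss Fx' by (rule key[OF gg gr'])
    qed
  qed
qed

fun surv :: "nat \<Rightarrow> nat \<Rightarrow> nat list \<Rightarrow> nat \<Rightarrow> nat list \<Rightarrow> real" where
  "surv d h v 0 x = (if x = v then 0 else 1)"
| "surv d h v (Suc n) x = (if x = v then 0 else
     (\<Sum>z\<in>tree_nbrs d h x. surv d h v n z / real (card (tree_nbrs d h x))))"

fun wexp :: "(nat list \<Rightarrow> real) \<Rightarrow> nat \<Rightarrow> nat \<Rightarrow> nat list \<Rightarrow> nat \<Rightarrow> nat list \<Rightarrow> real" where
  "wexp F d h v 0 x = F x"
| "wexp F d h v (Suc n) x = (if x = v then 0 else
     (\<Sum>z\<in>tree_nbrs d h x. wexp F d h v n z / real (card (tree_nbrs d h x))))"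

lemma fhp_nonneg: "first_hit_prob d h v n x \<ge> 0"
  by (induction n arbitrary: x) (auto intro!: sum_nonneg divide_nonneg_nonneg)

lemma surv_nonneg: "surv d h v n x \<ge> 0"
  by (induction n arbitrary: x) (auto intro!: sum_nonneg divide_nonneg_nonneg)

lemma finite_V: "finite (tree_vertices d h)"
proof -
  have "tree_vertices d h \<subseteq> {xs. set xs \<subseteq> {..<d} \<and> length xs \<le> h}"
    unfolding tree_vertices_def by auto
  moreover have "finite {xs. set xs \<subseteq> {..<d} \<and> length xs \<le> h}"
    by (rule finite_lists_length_le) auto
  ultimately show ?thesis by (rule finite_subset)
qed

lemma finite_nbrs: "finite (tree_nbrs d h x)"
  unfolding tree_nbrs_def using finite_V by auto

lemma nbrs_sub: "tree_nbrs d h x \<subseteq> tree_vertices d h"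
  unfolding tree_nbrs_def by auto

locale walk =
  fixes d h :: nat and v :: "nat list" and F :: "nat list \<Rightarrow> real"
  assumes ne: "\<And>x. x \<in> tree_vertices d h \<Longrightarrow> tree_nbrs d h x \<noteq> {}"
    and Fv: "F v = 0"
    and harm: "\<And>x. x \<in> tree_vertices d h \<Longrightarrow> x \<noteq> v \<Longrightarrow>
       F x = 1 + (\<Sum>z\<in>tree_nbrs d h x. F z / real (card (tree_nbrs d h x)))"
begin

abbreviation "V \<equiv> tree_vertices d h"
abbreviation "N x \<equiv> tree_nbrs d h x"
abbreviation "p n x \<equiv> first_hit_prob d h v n x"
abbreviation "Q n x \<equiv> surv d h v n x"
abbreviation "W n x \<equiv> wexp F d h v n x"

lemma cardpos: "x \<in> V \<Longrightarrow> real (card (N x)) > 0"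
  using ne[of x] finite_nbrs[of d h x] by (simp add: card_gt_0_iff)

lemma avg1: "x \<in> V \<Longrightarrow> (\<Sum>z\<in>N x. c / real (card (N x))) = c"
  using cardpos by simp

lemma PQ: "x \<in> V \<Longrightarrow> (\<Sum>k<Suc n. p k x) + Q n x = 1"
proof (induction n arbitrary: x)
  case 0 then show ?case by simp
next
  case (Suc n)
  show ?case
  proof (cases "x = v")
    case True
    have "(\<Sum>k<Suc (Suc n). p k x) = p 0 x"
      by (subst sum.lessThan_Suc_shift) (simp add: True)
    then show ?thesis using True by simp
  next
    case False
    have "(\<Sum>k<Suc (Suc n). p k x) = (\<Sum>k<Suc n. p (Suc k) x)"
      by (subst sum.lessThan_Suc_shift) (simp add: False)
    also have "\<dots> = (\<Sum>k<Suc n. \<Sum>z\<in>N x. p k z / real (card (N x)))"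
      using False by simp
    also have "\<dots> = (\<Sum>z\<in>N x. \<Sum>k<Suc n. p k z / real (card (N x)))"
      by (rule sum.swap)
    also have "\<dots> = (\<Sum>z\<in>N x. (\<Sum>k<Suc n. p k z) / real (card (N x)))"
      by (intro sum.cong refl) (rule sum_divide_distrib[symmetric])
    finally have "(\<Sum>k<Suc (Suc n). p k x) + Q (Suc n) x =
       (\<Sum>z\<in>N x. ((\<Sum>k<Suc n. p k z) + Q n z) / real (card (N x)))"
      using False by (simp add: sum.distrib add_divide_distrib)
    also have "\<dots> = (\<Sum>z\<in>N x. 1 / real (card (N x)))"
      using Suc.IH[OF subsetD[OF nbrs_sub]] by (intro sum.cong refl) simp
    also have "\<dots> = 1" using avg1 Suc.prems by blast
    finally show ?thesis .
  qed
qed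

lemma WQ: "x \<in> V \<Longrightarrow> W n x + (\<Sum>k<n. Q k x) = F x"
proof (induction n arbitrary: x)
  case 0 then show ?case by simp
next
  case (Suc n)
  show ?case
  proof (cases "x = v")
    case True
    have "(\<Sum>k<Suc n. Q k x) = 0" using True by (intro sum.neutral) (metis surv.elims)
    then show ?thesis using True Fv by simp
  next
    case False
    have "(\<Sum>k<Suc n. Q k x) = 1 + (\<Sum>k<n. Q (Suc k) x)"
      by (subst sum.lessThan_Suc_shift) (simp add: False)
    also have "(\<Sum>k<n. Q (Suc k) x) = (\<Sum>k<n. \<Sum>z\<in>N x. Q k z / real (card (N x)))"
      using False by simp
    also have "\<dots> = (\<Sum>z\<in>N x. \<Sum>k<n. Q k z / real (card (N x)))"
      by (rule sum.swap)
    also have "\<dots> = (\<Sum>z\<in>N x. (\<Sum>k<n. Q k z) / real (card (N x)))"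
      by (simp add: sum_divide_distrib)
    finally have "W (Suc n) x + (\<Sum>k<Suc n. Q k x) =
       1 + (\<Sum>z\<in>N x. (W n z + (\<Sum>k<n. Q k z)) / real (card (N x)))"
      using False by (simp add: sum.distrib add_divide_distrib)
    also have "\<dots> = 1 + (\<Sum>z\<in>N x. F z / real (card (N x)))"
      using Suc.IH[OF subsetD[OF nbrs_sub]] by (intro arg_cong2[where f="(+)"] sum.cong refl) simp
    also have "\<dots> = F x" using harm[OF Suc.prems False] by simp
    finally show ?thesis .
  qed
qed

lemma Wbound:
  assumes M: "\<And>y. y \<in> V \<Longrightarrow> \<bar>F y\<bar> \<le> M"
  shows "x \<in> V \<Longrightarrow> \<bar>W n x\<bar> \<le> M * Q n x"
proof (induction n arbitrary: x)
  case 0 then show ?case using M Fv by (cases "x = v") auto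
next
  case (Suc n)
  show ?case
  proof (cases "x = v")
    case True then show ?thesis by simp
  next
    case False
    have "\<bar>W (Suc n) x\<bar> \<le> (\<Sum>z\<in>N x. \<bar>W n z\<bar> / real (card (N x)))"
      using False by (simp add: sum_abs[THEN order_trans])
    also have "\<dots> \<le> (\<Sum>z\<in>N x. M * Q n z / real (card (N x)))"
      using Suc.IH[OF subsetD[OF nbrs_sub]] cardpos[OF Suc.prems]
      by (intro sum_mono divide_right_mono) simp_all
    also have "\<dots> = M * Q (Suc n) x"
      using False by (simp add: sum_distrib_left)
    finally show ?thesis .
  qed
qed

lemma Q_Suc: "x \<in> V \<Longrightarrow> Q (Suc n) x = Q n x - p (Suc n) x"
  using PQ[of x n] PQ[of x "Suc n"] by simp

lemma Q_mono: assumes "x \<in> V" "m \<le> n" shows "Q n x \<le> Q m x"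
proof -
  have "\<And>k. Q (Suc k) x \<le> Q k x"
  proof -
    fix k show "Q (Suc k) x \<le> Q k x"
      using Q_Suc[OF assms(1), of k] fhp_nonneg[of d h v "Suc k" x] by linarith
  qed
  then show ?thesis using lift_Suc_antimono_le[of "\<lambda>n. Q n x"] assms(2) by blast
qed

lemma Q_le1: "x \<in> V \<Longrightarrow> Q n x \<le> 1"
  using PQ[of x n] sum_nonneg[of "{..<Suc n}" "\<lambda>k. p k x"] fhp_nonneg by force

lemma s_id: "x \<in> V \<Longrightarrow> (\<Sum>j<Suc n. real j * p j x) = (\<Sum>k<Suc n. Q k x) - real (Suc n) * Q n x"
proof (induction n)
  case 0 then show ?case by simp
next
  case (Suc n)
  have q: "Q (Suc n) x = Q n x - p (Suc n) x" using Q_Suc[OF Suc.prems] .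
  have ih: "(\<Sum>j<Suc n. real j * p j x) = (\<Sum>k<Suc n. Q k x) - real (Suc n) * Q n x"
    using Suc by blast
  show ?case unfolding sum.lessThan_Suc[of _ "Suc n"] ih q
    by (simp only: of_nat_Suc algebra_simps)
qed

lemma s_le: "x \<in> V \<Longrightarrow> (\<Sum>j<n. real j * p j x) \<le> (\<Sum>k<n. Q k x)"
proof (cases n)
  case 0 then show ?thesis by simp
next
  case (Suc m)
  assume "x \<in> V"
  then show ?thesis using s_id[of x m] surv_nonneg[of d h v m x] Suc
    by (simp add: mult_nonneg_nonneg)
qed

lemma hit: assumes u: "u \<in> V" shows "hitting_time d h u v = ennreal (F u)"
proof -
  define M where "M = (\<Sum>y\<in>V. \<bar>F y\<bar>)"
  have M: "\<And>y. y \<in> V \<Longrightarrow> \<bar>F y\<bar> \<le> M"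
    unfolding M_def by (rule member_le_sum) (auto simp: finite_V)
  have M0: "M \<ge> 0" unfolding M_def by (simp add: sum_nonneg)
  have Wb: "\<And>n. \<bar>W n u\<bar> \<le> M * Q n u" using Wbound[OF M u] by blast
  have bnd: "\<And>n. (\<Sum>k<n. Q k u) \<le> F u + M"
  proof -
    fix n
    have "\<bar>W n u\<bar> \<le> M" using Wb[of n] Q_le1[OF u, of n] M0
      by (meson mult_left_le order_trans surv_nonneg)
    then show "(\<Sum>k<n. Q k u) \<le> F u + M" using WQ[OF u, of n] by linarith
  qed
  have sQ: "summable (\<lambda>k. Q k u)"
    by (rule summableI_nonneg_bounded[OF surv_nonneg bnd])
  have Q0: "(\<lambda>n. Q n u) \<longlonglongrightarrow> 0" by (rule summable_LIMSEQ_zero[OF sQ])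
  have W0: "(\<lambda>n. W n u) \<longlonglongrightarrow> 0"
  proof (rule Lim_null_comparison)
    show "\<forall>\<^sub>F n in sequentially. norm (W n u) \<le> M * Q n u" using Wb by simp
    show "(\<lambda>n. M * Q n u) \<longlonglongrightarrow> 0" using tendsto_mult_right_zero[OF Q0] by simp
  qed
  have QS: "(\<lambda>k. Q k u) sums F u"
    unfolding sums_def
  proof -
    have "(\<lambda>n. F u - W n u) \<longlonglongrightarrow> F u - 0" by (intro tendsto_intros W0)
    moreover have "\<And>n. F u - W n u = (\<Sum>k<n. Q k u)" using WQ[OF u] by (metis add_diff_cancel_left')
    ultimately show "(\<lambda>n. \<Sum>k<n. Q k u) \<longlonglongrightarrow> F u" by simp
  qed
  have PS: "(\<lambda>k. p k u) sums 1"
    unfolding sums_def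
  proof (rule LIMSEQ_imp_Suc)
    have "(\<lambda>n. 1 - Q n u) \<longlonglongrightarrow> 1 - 0" by (intro tendsto_intros Q0)
    moreover have "\<And>n. 1 - Q n u = (\<Sum>k<Suc n. p k u)" using PQ[OF u] by (metis add_diff_cancel_right')
    ultimately show "(\<lambda>n. \<Sum>k<Suc n. p k u) \<longlonglongrightarrow> 1" by simp
  qed
  have snn: "\<And>j. real j * p j u \<ge> 0" by (simp add: fhp_nonneg)
  have sbnd: "\<And>n. (\<Sum>j<n. real j * p j u) \<le> F u"
    using s_le[OF u] sum_le_suminf[OF sQ _ surv_nonneg] sums_unique[OF QS]
    by (metis order_trans finite_lessThan)
  have sS: "summable (\<lambda>j. real j * p j u)"
    by (rule summableI_nonneg_bounded[OF snn sbnd])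
  have up: "(\<Sum>j. real j * p j u) \<le> F u" by (rule suminf_le_const[OF sS sbnd])
  have low: "\<And>K. (\<Sum>k<K. Q k u) \<le> (\<Sum>j. real j * p j u)"
  proof -
    fix K
    have lim: "(\<lambda>n. (\<Sum>k<K. Q k u) - real K * Q n u) \<longlonglongrightarrow> (\<Sum>k<K. Q k u) - real K * 0"
      by (intro tendsto_intros Q0)
    have "\<forall>n\<ge>K. (\<Sum>k<K. Q k u) - real K * Q n u \<le> (\<Sum>j. real j * p j u)"
    proof (intro allI impI)
      fix n assume Kn: "K \<le> n"
      have "(\<Sum>k<K. Q k u) - real K * Q n u = (\<Sum>k<K. Q k u - Q n u)"
        by (simp add: sum_subtractf)
      also have "\<dots> \<le> (\<Sum>k<Suc n. Q k u - Q n u)"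
        using Kn Q_mono[OF u] by (intro sum_mono2) auto
      also have "\<dots> = (\<Sum>j<Suc n. real j * p j u)"
        using s_id[OF u, of n] by (simp add: sum_subtractf)
      also have "\<dots> \<le> (\<Sum>j. real j * p j u)"
        by (rule sum_le_suminf[OF sS]) (auto simp: snn)
      finally show "(\<Sum>k<K. Q k u) - real K * Q n u \<le> (\<Sum>j. real j * p j u)" .
    qed
    then show "(\<Sum>k<K. Q k u) \<le> (\<Sum>j. real j * p j u)"
      using LIMSEQ_le_const2[OF lim] by auto
  qed
  have "F u \<le> (\<Sum>j. real j * p j u)"
    using LIMSEQ_le_const2[OF QS[unfolded sums_def]] low by blast
  with up have eq: "(\<Sum>j. real j * p j u) = F u" by linarith
  have e1: "(\<Sum>n. ennreal (real n * p n u)) = ennreal (F u)"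
    using suminf_ennreal2[OF snn sS] eq by simp
  have e2: "(\<Sum>n. ennreal (p n u)) = 1"
    using suminf_ennreal2[OF fhp_nonneg sums_summable[OF PS]] sums_unique[OF PS] by simp
  show ?thesis unfolding hitting_time_def e1 e2 by simp
qed

end

lemma nbrs_ne:
  assumes "d \<ge> 1" "h \<ge> 1" "x \<in> tree_vertices d h"
  shows "tree_nbrs d h x \<noteq> {}"
  using assms unfolding nbrs_eq[OF assms(3)] by (auto simp: lessThan_empty_iff)

lemma harm_avg:
  assumes d: "d \<ge> 1" and h: "h \<ge> 1" and x: "x \<in> tree_vertices d h" and v: "v \<in> tree_vertices d h"
    and xv: "x \<noteq> v"
  shows "Fv d h v x = 1 + (\<Sum>z\<in>tree_nbrs d h x. Fv d h v z / real (card (tree_nbrs d h x)))"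
proof -
  have cp: "real (card (tree_nbrs d h x)) > 0"
    using nbrs_ne[OF d h x] finite_nbrs[of d h x] by (simp add: card_gt_0_iff)
  have e: "real (card (tree_nbrs d h x)) * (Fv d h v x - 1) = (\<Sum>z\<in>tree_nbrs d h x. Fv d h v z)"
    by (rule harm_tree[OF assms])
  have "(\<Sum>z\<in>tree_nbrs d h x. Fv d h v z / real (card (tree_nbrs d h x))) = Fv d h v x - 1"
    unfolding sum_divide_distrib[symmetric] e[symmetric] using cp by simp
  then show ?thesis by simp
qed

theorem mainTheorem9:
  fixes d h :: nat and u v :: "nat list"
  assumes "d \<ge> 1" and "h \<ge> 1"
    and "u \<in> tree_vertices d h" and "v \<in> tree_vertices d h"
  shows "hitting_time d h u v =
    ennreal (f_poly (h - length (lca u v)) (real d) - f_poly (h - length u) (real d)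
           + g_poly h (length v) (real d) - g_poly h (length (lca u v)) (real d))"
proof -
  interpret walk d h v "Fv d h v"
  proof
    show "\<And>x. x \<in> tree_vertices d h \<Longrightarrow> tree_nbrs d h x \<noteq> {}"
      using nbrs_ne assms(1,2) by blast
    show "Fv d h v v = 0" by (simp add: Fv_def lca_self)
    show "\<And>x. x \<in> tree_vertices d h \<Longrightarrow> x \<noteq> v \<Longrightarrow>
       Fv d h v x = 1 + (\<Sum>z\<in>tree_nbrs d h x. Fv d h v z / real (card (tree_nbrs d h x)))"
      using harm_avg assms by blast
  qed
  show ?thesis using hit[OF assms(3)] by (simp add: Fv_def)
qed

end
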